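(* Let $u_0\in L^2([0,1])$ have weak derivative $\partial_x u_0\in L^2([0,1])$ and satisfy $u_0(0)=u_0(1)=0$. If $v_0=H(u_0)$, then $$\Vert\partial^2_{xx}v_0\Vert_{L^2}\le\tfrac12 e^{\Vert u_0\Vert_{L^2}}\Vert\partial_x u_0\Vert_{L^2}\Bigl(1+\frac{\Vert u_0\Vert_{L^2}}{2}\Bigr).$$
   Context: $H(u)(x)=\dfrac{e^{-\frac12\int_0^x u(s)ds}}{\int_0^1 e^{-\frac12\int_0^y u(s)ds}\,dy}$ for $u\in L^2([0,1])$, $x\in[0,1]$ (Cole–Hopf transform). *)

theory Defs
  imports "HOL-Analysis.Analysis"
begin

definition L2_01 :: "(real \<Rightarrow> real) \<Rightarrow> bool" where
  "L2_01 f \<longleftrightarrow> set_borel_measurable lborel {0..1} f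
      \<and> set_integrable lborel {0..1} (\<lambda>x. (f x)^2)"

definition L2norm_01 :: "(real \<Rightarrow> real) \<Rightarrow> real" where
  "L2norm_01 f = sqrt (LINT x:{0..1}|lborel. (f x)^2)"

definition test_fun_01 :: "(real \<Rightarrow> real) \<Rightarrow> bool" where
  "test_fun_01 \<phi> \<longleftrightarrow> (\<forall>k x. ((deriv ^^ k) \<phi>) field_differentiable (at x))
      \<and> (\<exists>a b. 0 < a \<and> a \<le> b \<and> b < 1 \<and> (\<forall>x. x \<notin> {a..b} \<longrightarrow> \<phi> x = 0))"

definition weak_deriv_01 :: "(real \<Rightarrow> real) \<Rightarrow> (real \<Rightarrow> real) \<Rightarrow> bool" where
  "weak_deriv_01 u du \<longleftrightarrow> (\<forall>\<phi>. test_fun_01 \<phi> \<longrightarrow>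
      (LINT x:{0..1}|lborel. u x * deriv \<phi> x) = - (LINT x:{0..1}|lborel. du x * \<phi> x))"

definition weak_deriv2_01 :: "(real \<Rightarrow> real) \<Rightarrow> (real \<Rightarrow> real) \<Rightarrow> bool" where
  "weak_deriv2_01 v w \<longleftrightarrow> (\<forall>\<phi>. test_fun_01 \<phi> \<longrightarrow>
      (LINT x:{0..1}|lborel. v x * deriv (deriv \<phi>) x) = (LINT x:{0..1}|lborel. w x * \<phi> x))"

definition ColeHopf :: "(real \<Rightarrow> real) \<Rightarrow> real \<Rightarrow> real" where
  "ColeHopf u x = exp (- (1/2) * (LINT s:{0..x}|lborel. u s))
      / (LINT y:{0..1}|lborel. exp (- (1/2) * (LINT s:{0..y}|lborel. u s)))"

end

theory Submission
  imports Defs "HOL-Computational_Algebra.Polynomial"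
begin


definition smooth :: "(real \<Rightarrow> real) \<Rightarrow> bool" where
  "smooth f \<longleftrightarrow> (\<forall>k x. ((deriv ^^ k) f) field_differentiable (at x))"

lemma smooth_coind:
  assumes "P f" and step: "\<And>g. P g \<Longrightarrow> (\<forall>x. g field_differentiable (at x)) \<and> P (deriv g)"
  shows "smooth f"
proof -
  have "P ((deriv ^^ k) f)" for k
    by (induct k) (auto simp: assms(1) dest: step)
  then show ?thesis unfolding smooth_def using step by blast
qed

lemma smooth_D: "smooth f \<Longrightarrow> DERIV f x :> deriv f x"
  unfolding smooth_def using DERIV_deriv_iff_field_differentiable
  by (metis funpow_0)

lemma smooth_deriv: "smooth f \<Longrightarrow> smooth (deriv f)"
  unfolding smooth_def by (metis funpow_Suc_right o_apply)

lemma deriv_mult_fun: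
  assumes "\<And>x. DERIV f x :> f' x" "\<And>x. DERIV g x :> g' x"
  shows "deriv (\<lambda>x. f x * g x) = (\<lambda>x. f' x * g x + f x * g' x)"
  by (rule ext, rule DERIV_imp_deriv) (auto intro!: derivative_eq_intros assms)

lemma deriv_add_fun:
  assumes "\<And>x. DERIV f x :> f' x" "\<And>x. DERIV g x :> g' x"
  shows "deriv (\<lambda>x. f x + g x) = (\<lambda>x. f' x + g' x)"
  by (rule ext, rule DERIV_imp_deriv) (auto intro!: derivative_eq_intros assms)

inductive Qs :: "(real \<Rightarrow> real) \<Rightarrow> bool" where
  Qm: "smooth f \<Longrightarrow> smooth g \<Longrightarrow> Qs (\<lambda>x. f x * g x)"
| Qa: "Qs f \<Longrightarrow> Qs g \<Longrightarrow> Qs (\<lambda>x. f x + g x)"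

lemma Qs_step: "Qs h \<Longrightarrow> (\<forall>x. DERIV h x :> deriv h x) \<and> Qs (deriv h)"
proof (induct rule: Qs.induct)
  case (Qm f g)
  have d: "deriv (\<lambda>x. f x * g x) = (\<lambda>x. deriv f x * g x + f x * deriv g x)"
    by (rule deriv_mult_fun) (use Qm smooth_D in auto)
  show ?case
  proof
    show "\<forall>x. DERIV (\<lambda>x. f x * g x) x :> deriv (\<lambda>x. f x * g x) x"
      unfolding d using Qm smooth_D by (auto intro!: derivative_eq_intros)
    show "Qs (deriv (\<lambda>x. f x * g x))"
      unfolding d by (intro Qs.intros smooth_deriv Qm)
  qed
next
  case (Qa f g)
  have d: "deriv (\<lambda>x. f x + g x) = (\<lambda>x. deriv f x + deriv g x)"
    by (rule deriv_add_fun) (use Qa in auto)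
  show ?case
  proof
    show "\<forall>x. DERIV (\<lambda>x. f x + g x) x :> deriv (\<lambda>x. f x + g x) x"
      unfolding d using Qa by (auto intro!: derivative_eq_intros)
    show "Qs (deriv (\<lambda>x. f x + g x))"
      unfolding d by (intro Qs.intros) (use Qa in auto)
  qed
qed

lemma Qs_smooth: "Qs h \<Longrightarrow> smooth h"
  by (rule smooth_coind[of Qs]) (auto dest: Qs_step simp: field_differentiable_def)

lemma smooth_const: "smooth (\<lambda>x. c)"
proof (rule smooth_coind[of "\<lambda>h::real\<Rightarrow>real. \<exists>c. h = (\<lambda>x. c)"])
  fix g :: "real \<Rightarrow> real" assume "\<exists>c. g = (\<lambda>x. c)"
  then obtain c where g: "g = (\<lambda>x. c)" by blast
  have "deriv g = (\<lambda>x. 0)" unfolding g by (rule ext) simp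
  then show "(\<forall>x. g field_differentiable at x) \<and> (\<exists>c. deriv g = (\<lambda>x. c))"
    unfolding g by auto
qed auto

lemma smooth_mult: "smooth f \<Longrightarrow> smooth g \<Longrightarrow> smooth (\<lambda>x. f x * g x)"
  by (rule Qs_smooth[OF Qm])

lemma smooth_add: "smooth f \<Longrightarrow> smooth g \<Longrightarrow> smooth (\<lambda>x. f x + g x)"
proof -
  assume "smooth f" "smooth g"
  then have "Qs (\<lambda>x. f x * 1)" "Qs (\<lambda>x. g x * 1)" using Qm[OF _ smooth_const] by blast+
  then have "Qs (\<lambda>x. f x * 1 + g x * 1)" by (rule Qs.intros)
  then show ?thesis by (simp add: Qs_smooth)
qed

lemma smooth_cmult: "smooth f \<Longrightarrow> smooth (\<lambda>x. c * f x)"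
  using smooth_mult[OF smooth_const] by blast

lemma smooth_diff: "smooth f \<Longrightarrow> smooth g \<Longrightarrow> smooth (\<lambda>x. f x - g x)"
  using smooth_add[of f "\<lambda>x. (-1) * g x"] smooth_cmult[of g "-1"] by simp

lemma smooth_affine:
  assumes "smooth f" shows "smooth (\<lambda>x. f (c * x + d))"
proof (rule smooth_coind[of "\<lambda>h. \<exists>k e. h = (\<lambda>x. e * (deriv ^^ k) f (c * x + d))"])
  show "\<exists>k e. (\<lambda>x. f (c * x + d)) = (\<lambda>x. e * (deriv ^^ k) f (c * x + d))"
    by (rule exI[of _ 0], rule exI[of _ 1]) simp
next
  fix g assume "\<exists>k e. g = (\<lambda>x. e * (deriv ^^ k) f (c * x + d))"
  then obtain k e where g: "g = (\<lambda>x. e * (deriv ^^ k) f (c * x + d))" by blast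
  have sk: "smooth ((deriv ^^ k) f)"
    using assms by (induct k) (auto intro: smooth_deriv)
  have D: "DERIV g x :> e * (deriv ^^ Suc k) f (c * x + d) * c" for x
    unfolding g using smooth_D[OF sk, of "c * x + d"]
    by (auto intro!: derivative_eq_intros DERIV_chain2[where f="(deriv ^^ k) f"])
  have "deriv g = (\<lambda>x. (e * c) * (deriv ^^ Suc k) f (c * x + d))"
    by (rule ext, rule DERIV_imp_deriv) (use D in \<open>simp add: ac_simps\<close>)
  then show "(\<forall>x. g field_differentiable at x) \<and> (\<exists>k e. deriv g = (\<lambda>x. e * (deriv ^^ k) f (c * x + d)))"
    using D by (auto simp: field_differentiable_def intro!: exI[of _ "Suc k"])
qed



definition gp :: "real poly \<Rightarrow> real \<Rightarrow> real" where
  "gp p t = (if t > 0 then poly p (1/t) * exp (-(1/t)) else 0)"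

lemma lim_poly_exp_top: fixes p :: "real poly" shows "((\<lambda>x. poly p x * exp (-x)) \<longlongrightarrow> 0) at_top"
proof -
  have "((\<lambda>x. \<Sum>i\<le>degree p. coeff p i * (x ^ i / exp x)) \<longlongrightarrow> (\<Sum>i\<le>degree p. coeff p i * 0)) at_top"
    by (intro tendsto_sum tendsto_mult_left tendsto_power_div_exp_0)
  moreover have "poly p x * exp (-x) = (\<Sum>i\<le>degree p. coeff p i * (x ^ i / exp x))" for x
    by (simp add: poly_altdef exp_minus divide_inverse sum_distrib_right mult.assoc)
  ultimately show ?thesis by simp
qed

lemma lim_poly_exp: fixes p :: "real poly" shows "((\<lambda>t. poly p (1/t) * exp (-(1/t))) \<longlongrightarrow> 0) (at_right 0)"
  apply (subst filterlim_at_right_to_top)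
  using lim_poly_exp_top[of p] by (simp add: inverse_eq_divide)

definition gstep :: "real poly \<Rightarrow> real poly" where
  "gstep p = pCons 0 (pCons 0 (p - pderiv p))"

lemma gp_DERIV: "DERIV (gp p) t :> gp (gstep p) t"
proof (cases "t > 0")
  case True
  have "DERIV (\<lambda>t. poly p (1/t) * exp (-(1/t))) t :>
     poly (pderiv p) (1/t) * (- 1 / t^2) * exp (-(1/t)) + poly p (1/t) * (exp (-(1/t)) * (1/t^2))"
    using True by (auto intro!: derivative_eq_intros simp: power2_eq_square field_simps)
  moreover have "poly (pderiv p) (1/t) * (- 1 / t^2) * exp (-(1/t)) + poly p (1/t) * (exp (-(1/t)) * (1/t^2))
      = gp (gstep p) t"
    using True by (simp add: gp_def gstep_def power2_eq_square field_simps)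
  ultimately have "DERIV (\<lambda>t. poly p (1/t) * exp (-(1/t))) t :> gp (gstep p) t" by simp
  then show ?thesis
    by (rule has_field_derivative_transform_within_open[where S="{0<..}"]) (use True in \<open>auto simp: gp_def\<close>)
next
  case False
  show ?thesis
  proof (cases "t < 0")
    case True
    have "DERIV (\<lambda>t. 0) t :> gp (gstep p) t" using True by (simp add: gp_def)
    then show ?thesis
      by (rule has_field_derivative_transform_within_open[where S="{..<0}"]) (use True in \<open>auto simp: gp_def\<close>)
  next
    case False
    with \<open>\<not> t > 0\<close> have t: "t = 0" by simp
    have r: "((\<lambda>h. (gp p (0 + h) - gp p 0) / h) \<longlongrightarrow> 0) (at_right 0)"
    proof -
      have "((\<lambda>h. poly (pCons 0 p) (1/h) * exp (-(1/h))) \<longlongrightarrow> 0) (at_right 0)"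
        by (rule lim_poly_exp)
      then show ?thesis
        by (rule Lim_transform_eventually)
           (auto simp: eventually_at_right_less gp_def eventually_at_filter intro!: eventually_mono[OF eventually_at_right_less])
    qed
    have l: "((\<lambda>h. (gp p (0 + h) - gp p 0) / h) \<longlongrightarrow> 0) (at_left 0)"
    proof (rule tendsto_eventually)
      show "\<forall>\<^sub>F h in at_left 0. (gp p (0 + h) - gp p 0) / h = 0"
      proof -
        have "eventually (\<lambda>x. x \<in> {-1<..<0}) (at_left (0::real))" by (rule eventually_at_left_real) simp
        then show ?thesis by (rule eventually_mono) (auto simp: gp_def)
      qed
    qed
    have "((\<lambda>h. (gp p (0 + h) - gp p 0) / h) \<longlongrightarrow> 0) (at 0)"
      using r l by (simp add: filterlim_split_at)
    then show ?thesis unfolding t by (simp add: DERIV_def gp_def)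
  qed
qed

lemma gp_smooth: "smooth (gp p)"
proof (rule smooth_coind[of "\<lambda>h. \<exists>p. h = gp p"])
  fix g :: "real \<Rightarrow> real" assume "\<exists>p. g = gp p"
  then obtain p where g: "g = gp p" by blast
  have "deriv g = gp (gstep p)" unfolding g by (rule ext, rule DERIV_imp_deriv, rule gp_DERIV)
  then show "(\<forall>x. g field_differentiable at x) \<and> (\<exists>p. deriv g = gp p)"
    unfolding g using gp_DERIV by (auto simp: field_differentiable_def)
qed auto

definition sf :: "real \<Rightarrow> real" where "sf = gp 1"

lemma sf_smooth: "smooth sf" unfolding sf_def by (rule gp_smooth)
lemma sf_eq: "sf t = (if t > 0 then exp (-(1/t)) else 0)" by (simp add: sf_def gp_def)

definition bump :: "real \<Rightarrow> real \<Rightarrow> real" where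
  "bump e t = sf (e + t) * sf (e - t)"

lemma bump_smooth: "smooth (bump e)"
  unfolding bump_def
  using smooth_mult[OF smooth_affine[OF sf_smooth, of 1 e] smooth_affine[OF sf_smooth, of "-1" e]]
  by (simp add: add.commute)

lemma bump_nonneg: "bump e t \<ge> 0" by (simp add: bump_def sf_eq)
lemma bump_zero: "\<bar>t\<bar> \<ge> e \<Longrightarrow> bump e t = 0" by (auto simp: bump_def sf_eq)
lemma bump_pos: "\<bar>t\<bar> < e \<Longrightarrow> bump e t > 0" by (auto simp: bump_def sf_eq)

lemma smooth_isCont: "smooth f \<Longrightarrow> isCont f x"
  using smooth_D DERIV_isCont by blast



lemma antideriv_zero:
  fixes f :: "real \<Rightarrow> real"
  assumes "\<And>x. x \<le> c \<Longrightarrow> f x = 0" "t \<le> c"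
  shows "integral {a..t} f = 0"
proof -
  have "integral {a..t} f = integral {a..t} (\<lambda>_. 0::real)"
    by (rule integral_cong) (use assms in auto)
  then show ?thesis by simp
qed

lemma antideriv_global:
  fixes f :: "real \<Rightarrow> real"
  assumes cont: "\<And>x. isCont f x" and ac: "a < c" and z: "\<And>x. x \<le> c \<Longrightarrow> f x = 0"
  shows "DERIV (\<lambda>t. integral {a..t} f) t :> f t"
proof (cases "t < c")
  case True
  have Z: "integral {a..s} f = 0" if "s < c" for s
    by (rule antideriv_zero[where c=c]) (use that z in auto)
  have "DERIV (\<lambda>t. 0) t :> f t" using True z by simp
  then show ?thesis
    by (rule has_field_derivative_transform_within_open[where S="{..<c}"])
       (use True Z in auto)
next
  case False
  then have t: "a < t" using ac by simp
  have "continuous_on {a..t+1} f" by (intro continuous_at_imp_continuous_on) (use cont in auto)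
  from integral_has_real_derivative[OF this, of t] t
  have "((\<lambda>x. integral {a..x} f) has_real_derivative f t) (at t within {a..t+1})" by simp
  moreover have "at t within {a..t+1} = at t"
    by (rule at_within_interior) (use t in simp)
  ultimately show ?thesis by simp
qed

definition Bst :: "real \<Rightarrow> real \<Rightarrow> real" where
  "Bst e t = integral {-1..t} (bump e)"

lemma bump_isCont: "isCont (bump e) x"
  using smooth_isCont[OF bump_smooth] .

lemma Bst_DERIV: "0 < e \<Longrightarrow> e < 1 \<Longrightarrow> DERIV (Bst e) t :> bump e t"
  unfolding Bst_def
  by (rule antideriv_global[where c="-e"]) (auto intro: bump_isCont bump_zero)

lemma Bst_low: "0 < e \<Longrightarrow> t \<le> -e \<Longrightarrow> Bst e t = 0"
  unfolding Bst_def by (rule antideriv_zero[where c="-e"]) (auto intro: bump_zero)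

lemma Bst_high: assumes "0 < e" "e < 1" "e \<le> t" shows "Bst e t = Bst e e"
proof (cases "e < t")
  case True
  from MVT2[OF True, of "Bst e" "bump e"] Bst_DERIV[OF assms(1,2)]
  obtain z where "e < z" "Bst e t - Bst e e = (t - e) * bump e z" by blast
  then show ?thesis using bump_zero[of e z] by simp
qed (use assms in simp)

lemma Bst_pos: assumes "0 < e" "e < 1" shows "Bst e e > 0"
proof -
  have "-e < e" using assms by simp
  from MVT2[OF this, of "Bst e" "bump e"] Bst_DERIV[OF assms]
  obtain z where "-e < z" "z < e" "Bst e e - Bst e (-e) = (e - -e) * bump e z" by blast
  then show ?thesis using bump_pos[of z e] Bst_low[OF assms(1), of "-e"] assms by simp
qed

lemma deriv_Bst: "0 < e \<Longrightarrow> e < 1 \<Longrightarrow> deriv (Bst e) = bump e"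
  by (rule ext, rule DERIV_imp_deriv, rule Bst_DERIV)

lemma Bst_smooth: assumes "0 < e" "e < 1" shows "smooth (Bst e)"
  unfolding smooth_def
proof (intro allI)
  fix k x
  show "(deriv ^^ k) (Bst e) field_differentiable at x"
  proof (cases k)
    case 0 then show ?thesis using Bst_DERIV[OF assms] by (auto simp: field_differentiable_def)
  next
    case (Suc j)
    then have "(deriv ^^ k) (Bst e) = (deriv ^^ j) (bump e)"
      by (simp add: funpow_Suc_right deriv_Bst[OF assms] del: funpow.simps)
    then show ?thesis using bump_smooth unfolding smooth_def by simp
  qed
qed

definition Phi :: "real \<Rightarrow> real \<Rightarrow> real \<Rightarrow> real \<Rightarrow> real" where
  "Phi e x y t = Bst e (t - x) - Bst e (t - y)"

lemma Phi_test:
  assumes e: "0 < e" "e < x" "x \<le> y" "y + e < 1"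
  shows "test_fun_01 (Phi e x y)"
proof -
  have e1: "e < 1" using e by simp
  have sm: "smooth (Phi e x y)"
    unfolding Phi_def
    using smooth_diff[OF smooth_affine[OF Bst_smooth[OF e(1) e1], of 1 "-x"]
                        smooth_affine[OF Bst_smooth[OF e(1) e1], of 1 "-y"]] by simp
  have "\<forall>t. t \<notin> {x-e..y+e} \<longrightarrow> Phi e x y t = 0"
  proof (intro allI impI)
    fix t assume "t \<notin> {x-e..y+e}"
    then consider "t < x - e" | "t > y + e" by auto
    then show "Phi e x y t = 0"
    proof cases
      case 1 then show ?thesis using Bst_low[OF e(1), of "t-x"] Bst_low[OF e(1), of "t-y"] e
        by (simp add: Phi_def)
    next
      case 2 then show ?thesis using Bst_high[OF e(1) e1, of "t-x"] Bst_high[OF e(1) e1, of "t-y"] e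
        by (simp add: Phi_def)
    qed
  qed
  then show ?thesis using sm e unfolding test_fun_01_def smooth_def
    by (intro conjI) (simp, rule exI[of _ "x-e"], rule exI[of _ "y+e"], auto)
qed

lemma Phi_deriv: "0 < e \<Longrightarrow> e < 1 \<Longrightarrow> deriv (Phi e x y) = (\<lambda>t. bump e (t - x) - bump e (t - y))"
  unfolding Phi_def
  by (rule ext, rule DERIV_imp_deriv)
     (auto intro!: derivative_eq_intros DERIV_chain2[OF Bst_DERIV])



lemma bump_int:
  assumes "0 < e" "e < 1" "e \<le> z" "z + e \<le> 1"
  shows "(LINT t:{0..1}|lborel. bump e (t - z)) = Bst e e"
proof -
  have D: "DERIV (\<lambda>a. Bst e (a - z)) t :> bump e (t - z)" for t
    using DERIV_chain2[OF Bst_DERIV[OF assms(1,2)] DERIV_diff[OF DERIV_ident DERIV_const]] by simp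
  have "(\<integral>t. bump e (t - z) * indicator {0..1} t \<partial>lborel) = Bst e (1 - z) - Bst e (0 - z)"
    by (rule integral_FTC_Icc_real)
       (auto intro!: D continuous_intros isCont_o2[OF _ bump_isCont])
  also have "\<dots> = Bst e e"
    using Bst_high[OF assms(1,2), of "1 - z"] Bst_low[OF assms(1), of "0 - z"] assms by simp
  finally show ?thesis by (simp add: set_lebesgue_integral_def mult.commute)
qed

lemma cont_bump_shift: "continuous_on S (\<lambda>t. bump e (t - z))"
  by (intro continuous_at_imp_continuous_on ballI isCont_o2[OF _ bump_isCont] continuous_intros)

lemma local_avg:
  fixes h :: "real \<Rightarrow> real"
  assumes hc: "continuous_on {0..1} h"
    and e: "0 < e" "e < 1" "e \<le> z" "z + e \<le> 1"
    and d: "\<And>t. t \<in> {0..1} \<Longrightarrow> \<bar>t - z\<bar> < e \<Longrightarrow> \<bar>h t - h z\<bar> \<le> \<delta>"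
  shows "\<bar>(LINT t:{0..1}|lborel. h t * bump e (t - z)) - h z * Bst e e\<bar> \<le> \<delta> * Bst e e"
proof -
  have i1: "set_integrable lborel {0..1} (\<lambda>t. h t * bump e (t - z))"
    by (intro borel_integrable_atLeastAtMost' continuous_on_mult hc cont_bump_shift)
  have i2: "set_integrable lborel {0..1} (\<lambda>t. bump e (t - z))"
    by (intro borel_integrable_atLeastAtMost' cont_bump_shift)
  have eq: "(LINT t:{0..1}|lborel. h t * bump e (t - z)) - h z * Bst e e
      = (LINT t:{0..1}|lborel. h t * bump e (t - z) - h z * bump e (t - z))"
    using i1 i2 bump_int[OF e] by (simp add: set_integral_mult_right)
  have i3: "set_integrable lborel {0..1} (\<lambda>t. h t * bump e (t - z) - h z * bump e (t - z))"
    using i1 i2 by (intro set_integral_diff set_integrable_mult_right)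
  have pw: "\<bar>h t * bump e (t - z) - h z * bump e (t - z)\<bar> \<le> \<delta> * bump e (t - z)" if "t \<in> {0..1}" for t
  proof (cases "\<bar>t - z\<bar> < e")
    case True
    then have "\<bar>h t - h z\<bar> * bump e (t - z) \<le> \<delta> * bump e (t - z)"
      using d[OF that True] bump_nonneg by (intro mult_right_mono) auto
    then show ?thesis by (simp add: left_diff_distrib[symmetric] abs_mult bump_nonneg)
  next
    case False
    then show ?thesis using bump_zero[of e "t - z"] by simp
  qed
  have pw2: "-(\<delta> * bump e (t - z)) \<le> h t * bump e (t - z) - h z * bump e (t - z) \<and> h t * bump e (t - z) - h z * bump e (t - z) \<le> \<delta> * bump e (t - z)"
    if "t \<in> {0..1}" for t using pw[OF that] unfolding abs_le_iff by linarith
  have "(LINT t:{0..1}|lborel. h t * bump e (t - z) - h z * bump e (t - z)) \<le> (LINT t:{0..1}|lborel. \<delta> * bump e (t - z))"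
    using pw2 by (intro set_integral_mono i3 set_integrable_mult_right i2) (auto simp: abs_le_iff)
  moreover have "-(LINT t:{0..1}|lborel. \<delta> * bump e (t - z)) \<le> (LINT t:{0..1}|lborel. h t * bump e (t - z) - h z * bump e (t - z))"
  proof -
    have "(LINT t:{0..1}|lborel. (- \<delta>) * bump e (t - z)) \<le> (LINT t:{0..1}|lborel. h t * bump e (t - z) - h z * bump e (t - z))"
      using pw2 by (intro set_integral_mono i3 set_integrable_mult_right i2) auto
    moreover have "(LINT t:{0..1}|lborel. (- \<delta>) * bump e (t - z)) = - \<delta> * (LINT t:{0..1}|lborel. bump e (t - z))"
      by (rule set_integral_mult_right)
    moreover have "(LINT t:{0..1}|lborel. \<delta> * bump e (t - z)) = \<delta> * (LINT t:{0..1}|lborel. bump e (t - z))"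
      by (rule set_integral_mult_right)
    ultimately show ?thesis by simp
  qed
  moreover have "(LINT t:{0..1}|lborel. \<delta> * bump e (t - z)) = \<delta> * Bst e e"
    using bump_int[OF e] by (simp add: set_integral_mult_right)
  ultimately show ?thesis unfolding eq by linarith
qed

lemma dBR:
  fixes h :: "real \<Rightarrow> real"
  assumes hc: "continuous_on {0..1} h"
    and H: "\<And>\<phi>. test_fun_01 \<phi> \<Longrightarrow> (LINT t:{0..1}|lborel. h t * deriv \<phi> t) = 0"
    and xy: "0 < x" "x < y" "y < 1"
  shows "h x = h y"
proof (rule ccontr)
  assume ne: "h x \<noteq> h y"
  define \<delta> where "\<delta> = \<bar>h x - h y\<bar> / 3"
  have dpos: "\<delta> > 0" using ne by (simp add: \<delta>_def)
  have x01: "x \<in> {0..1}" "y \<in> {0..1}" using xy by auto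
  obtain dx where dx: "dx > 0" "\<And>t. t \<in> {0..1} \<Longrightarrow> dist t x < dx \<Longrightarrow> dist (h t) (h x) < \<delta>"
    using hc x01(1) dpos unfolding continuous_on_iff by metis
  obtain dy where dy: "dy > 0" "\<And>t. t \<in> {0..1} \<Longrightarrow> dist t y < dy \<Longrightarrow> dist (h t) (h y) < \<delta>"
    using hc x01(2) dpos unfolding continuous_on_iff by metis
  define e where "e = min (min dx dy) (min x (1 - y)) / 2"
  have e: "0 < e" "e < x" "y + e < 1" "e < dx" "e < dy" "e < 1"
    using dx dy xy by (auto simp: e_def min_def field_simps)
  have Ipos: "Bst e e > 0" using Bst_pos e by simp
  have ax: "\<bar>(LINT t:{0..1}|lborel. h t * bump e (t - x)) - h x * Bst e e\<bar> \<le> \<delta> * Bst e e"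
    by (rule local_avg[OF hc]) (use e xy dx in \<open>auto simp: dist_real_def intro: less_imp_le\<close>)
  have ay: "\<bar>(LINT t:{0..1}|lborel. h t * bump e (t - y)) - h y * Bst e e\<bar> \<le> \<delta> * Bst e e"
    by (rule local_avg[OF hc]) (use e xy dy in \<open>auto simp: dist_real_def intro: less_imp_le\<close>)
  have "(LINT t:{0..1}|lborel. h t * deriv (Phi e x y) t) = 0"
    by (rule H, rule Phi_test) (use e xy in auto)
  then have "(LINT t:{0..1}|lborel. h t * bump e (t - x) - h t * bump e (t - y)) = 0"
    by (simp add: Phi_deriv[OF e(1) e(6)] right_diff_distrib)
  moreover have "set_integrable lborel {0..1} (\<lambda>t. h t * bump e (t - z))" for z
    by (intro borel_integrable_atLeastAtMost' continuous_on_mult hc cont_bump_shift)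
  ultimately have eqA: "(LINT t:{0..1}|lborel. h t * bump e (t - x)) = (LINT t:{0..1}|lborel. h t * bump e (t - y))"
    by (simp add: set_integral_diff)
  have "\<bar>h x * Bst e e - h y * Bst e e\<bar> \<le> 2 * \<delta> * Bst e e"
    using ax ay eqA unfolding abs_le_iff by linarith
  then have "\<bar>h x - h y\<bar> * Bst e e \<le> 2 * \<delta> * Bst e e"
    using Ipos by (simp add: left_diff_distrib[symmetric] abs_mult)
  then have "\<bar>h x - h y\<bar> \<le> 2 * \<delta>" using Ipos by simp
  then show False using dpos unfolding \<delta>_def by simp
qed



lemma fubini_ibp:
  fixes g \<psi> \<psi>' :: "real \<Rightarrow> real"
  assumes g: "set_integrable lborel {0..1} g"
    and d\<psi>: "\<And>x. DERIV \<psi> x :> \<psi>' x" and c\<psi>': "\<And>x. isCont \<psi>' x"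
  shows "(LINT x:{0..1}|lborel. (LINT s:{0..x}|lborel. g s) * \<psi>' x)
       = (LINT s:{0..1}|lborel. g s * (\<psi> 1 - \<psi> s))"
proof -
  define g' where "g' s = indicator {0..1} s * g s" for s
  have g'i: "integrable lborel g'"
    using g unfolding set_integrable_def g'_def by simp
  have g'm[measurable]: "g' \<in> borel_measurable lborel" using g'i by auto
  have \<psi>'m[measurable]: "\<psi>' \<in> borel_measurable lborel"
    using borel_measurable_continuous_onI[of \<psi>'] c\<psi>' continuous_at_imp_continuous_on by auto
  obtain C where C: "\<And>x. x \<in> {0..1} \<Longrightarrow> \<bar>\<psi>' x\<bar> \<le> C"
  proof -
    have "compact (\<psi>' ` {0..1})"
      by (intro compact_continuous_image continuous_at_imp_continuous_on ballI c\<psi>') auto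
    then obtain B where "\<forall>y\<in>\<psi>' ` {0..1}. norm y \<le> B"
      using compact_imp_bounded bounded_iff by metis
    then show ?thesis by (intro that[of B]) auto
  qed
  define f where "f s x = g' s * (if s \<le> x \<and> x \<le> 1 then \<psi>' x else 0)" for s x
  define b where "b s x = \<bar>g' s\<bar> * (C * indicator {0..1} x)" for s x :: real
  have fm: "(\<lambda>(s, x). f s x) \<in> borel_measurable (lborel \<Otimes>\<^sub>M lborel)"
    unfolding f_def by measurable
  have bm: "(\<lambda>(s, x). b s x) \<in> borel_measurable (lborel \<Otimes>\<^sub>M lborel)"
    unfolding b_def by measurable
  have bint: "integrable (lborel \<Otimes>\<^sub>M lborel) (\<lambda>(s, x). b s x)"
  proof (rule lborel_pair.Fubini_integrable[OF bm])
    have "(\<integral>x. norm (case (s, x) of (s, x) \<Rightarrow> b s x) \<partial>lborel) = \<bar>g' s\<bar> * \<bar>C\<bar>" for s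
      by (simp add: b_def abs_mult)
    then show "integrable lborel (\<lambda>s. \<integral>x. norm (case (s, x) of (s, x) \<Rightarrow> b s x) \<partial>lborel)"
      using g'i by simp
    show "AE s in lborel. integrable lborel (\<lambda>x. case (s, x) of (s, x) \<Rightarrow> b s x)"
      by (simp add: b_def)
  qed
  have fint: "integrable (lborel \<Otimes>\<^sub>M lborel) (\<lambda>(s, x). f s x)"
  proof (rule Bochner_Integration.integrable_bound[OF bint fm])
    show "AE p in lborel \<Otimes>\<^sub>M lborel. norm (case p of (s, x) \<Rightarrow> f s x) \<le> norm (case p of (s, x) \<Rightarrow> b s x)"
    proof (rule AE_I2, clarify)
      fix s x :: real
      show "norm (f s x) \<le> norm (b s x)"
      proof (cases "s \<in> {0..1} \<and> s \<le> x \<and> x \<le> 1")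
        case True
        then have "\<bar>\<psi>' x\<bar> \<le> C" by (intro C) auto
        then show ?thesis using True by (simp add: f_def b_def abs_mult mult_left_mono)
      next
        case False
        then show ?thesis by (auto simp: f_def b_def g'_def)
      qed
    qed
  qed
  have "(\<integral>x. (\<integral>s. f s x \<partial>lborel) \<partial>lborel) = (\<integral>s. (\<integral>x. f s x \<partial>lborel) \<partial>lborel)"
    by (rule lborel_pair.Fubini_integral[OF fint])
  moreover have "(\<integral>s. f s x \<partial>lborel) = indicator {0..1} x *\<^sub>R ((LINT s:{0..x}|lborel. g s) * \<psi>' x)" for x
  proof (cases "x \<in> {0..1}")
    case True
    have "(\<integral>s. f s x \<partial>lborel) = (\<integral>s. (indicator {0..x} s *\<^sub>R g s) * \<psi>' x \<partial>lborel)"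
      using True by (intro Bochner_Integration.integral_cong) (auto simp: f_def g'_def indicator_def)
    also have "\<dots> = (LINT s:{0..x}|lborel. g s) * \<psi>' x"
      by (simp add: set_lebesgue_integral_def)
    finally show ?thesis using True by simp
  next
    case False
    have "f s x = 0" for s
      using False by (auto simp: f_def g'_def indicator_def)
    then show ?thesis using False by simp
  qed
  moreover have "(\<integral>x. f s x \<partial>lborel) = indicator {0..1} s *\<^sub>R (g s * (\<psi> 1 - \<psi> s))" for s
  proof (cases "s \<in> {0..1}")
    case True
    have "(\<integral>x. f s x \<partial>lborel) = g s * (\<integral>x. \<psi>' x * indicator {s..1} x \<partial>lborel)"
      using True by (subst integral_mult_right_zero[symmetric], intro Bochner_Integration.integral_cong)
         (auto simp: f_def g'_def indicator_def)
    also have "(\<integral>x. \<psi>' x * indicator {s..1} x \<partial>lborel) = \<psi> 1 - \<psi> s"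
      using True by (intro integral_FTC_Icc_real d\<psi> c\<psi>') auto
    finally show ?thesis using True by simp
  next
    case False
    then show ?thesis by (simp add: f_def g'_def)
  qed
  ultimately show ?thesis by (simp add: set_lebesgue_integral_def)
qed



lemma sbm_mult:
  fixes f g :: "real \<Rightarrow> real"
  assumes "set_borel_measurable lborel A f" "set_borel_measurable lborel A g"
  shows "set_borel_measurable lborel A (\<lambda>x. f x * g x)"
proof -
  have e: "(\<lambda>x. indicator A x *\<^sub>R (f x * g x)) = (\<lambda>x. (indicator A x *\<^sub>R f x) * (indicator A x *\<^sub>R g x))"
    by (auto simp: indicator_def)
  show ?thesis unfolding set_borel_measurable_def e
    by (intro borel_measurable_times assms[unfolded set_borel_measurable_def])
qed

lemma sbm_add:
  fixes f g :: "real \<Rightarrow> real"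
  assumes "set_borel_measurable lborel A f" "set_borel_measurable lborel A g"
  shows "set_borel_measurable lborel A (\<lambda>x. f x + g x)"
proof -
  have e: "(\<lambda>x. indicator A x *\<^sub>R (f x + g x)) = (\<lambda>x. (indicator A x *\<^sub>R f x) + (indicator A x *\<^sub>R g x))"
    by (auto simp: indicator_def)
  show ?thesis unfolding set_borel_measurable_def e
    by (intro borel_measurable_add assms[unfolded set_borel_measurable_def])
qed

lemma sbm_const: "A \<in> sets lborel \<Longrightarrow> set_borel_measurable lborel A (\<lambda>x. c::real)"
  unfolding set_borel_measurable_def by simp

lemma sbm_cong:
  assumes "set_borel_measurable lborel A f" "\<And>x. x \<in> A \<Longrightarrow> f x = g x"
  shows "set_borel_measurable lborel A (g :: real \<Rightarrow> real)"
proof -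
  have e: "(\<lambda>x. indicator A x *\<^sub>R g x) = (\<lambda>x. indicator A x *\<^sub>R f x)"
    using assms(2) by (auto simp: indicator_def)
  show ?thesis using assms(1) unfolding set_borel_measurable_def e .
qed

lemma sbm_cont: "continuous_on {a..b} f \<Longrightarrow> set_borel_measurable lborel {a..b} (f :: real \<Rightarrow> real)"
  using borel_integrable_atLeastAtMost'[of a b f] unfolding set_integrable_def set_borel_measurable_def
  by auto

lemma sint_bound:
  fixes f g :: "real \<Rightarrow> real"
  assumes "set_integrable lborel A g" "set_borel_measurable lborel A f"
    "\<And>x. x \<in> A \<Longrightarrow> \<bar>f x\<bar> \<le> g x"
  shows "set_integrable lborel A f"
proof -
  have "integrable lborel (\<lambda>x. indicator A x *\<^sub>R f x)"
  proof (rule Bochner_Integration.integrable_bound[of lborel "\<lambda>x. indicator A x *\<^sub>R g x"])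
    show "integrable lborel (\<lambda>x. indicator A x *\<^sub>R g x)" using assms(1) unfolding set_integrable_def .
    show "(\<lambda>x. indicator A x *\<^sub>R f x) \<in> borel_measurable lborel" using assms(2) unfolding set_borel_measurable_def .
    show "AE x in lborel. norm (indicator A x *\<^sub>R f x) \<le> norm (indicator A x *\<^sub>R g x)"
    proof (rule AE_I2)
      fix x show "norm (indicator A x *\<^sub>R f x) \<le> norm (indicator A x *\<^sub>R g x)"
        using assms(3)[of x] by (cases "x \<in> A") auto
    qed
  qed
  then show ?thesis unfolding set_integrable_def .
qed

lemma sint_nonneg:
  fixes f :: "real \<Rightarrow> real"
  assumes "\<And>x. x \<in> A \<Longrightarrow> 0 \<le> f x"
  shows "0 \<le> (LINT x:A|M. f x)"
  unfolding set_lebesgue_integral_def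
  by (rule Bochner_Integration.integral_nonneg) (use assms in \<open>auto simp: indicator_def\<close>)

lemma amgm2: "(s::real) > 0 \<Longrightarrow> 2 * \<bar>a * b\<bar> \<le> s * a^2 + b^2 / s"
proof -
  assume s: "s > 0"
  have "0 \<le> (s * \<bar>a\<bar> - \<bar>b\<bar>)^2" by simp
  also have "\<dots> = s * (s * a^2 + b^2 / s - 2 * \<bar>a * b\<bar>)"
    using s by (simp add: field_simps power2_eq_square abs_mult)
  finally show ?thesis using s by (simp add: zero_le_mult_iff)
qed

lemma real_cs_aux:
  fixes X A B :: real
  assumes A: "A \<ge> 0" and B: "B \<ge> 0" and H: "\<And>s. s > 0 \<Longrightarrow> 2 * X \<le> s * A + B / s"
  shows "X \<le> sqrt A * sqrt B"
proof (cases "A > 0 \<and> B > 0")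
  case True
  define s where "s = sqrt B / sqrt A"
  have s: "s > 0" using True by (simp add: s_def)
  have "s * A = sqrt A * sqrt B"
    using True by (simp add: s_def field_simps)
  moreover have "B / s = sqrt A * sqrt B"
    using True by (simp add: s_def field_simps)
  ultimately show ?thesis using H[OF s] by simp
next
  case False
  then have z: "A = 0 \<or> B = 0" using A B by auto
  show ?thesis
  proof (rule ccontr)
    assume "\<not> X \<le> sqrt A * sqrt B"
    then have X: "X > 0" using z by auto
    show False
    proof (cases "A = 0")
      case True
      define s where "s = B / X + 1"
      have "B / X \<ge> 0" using X B by simp
      then have s: "s > 0" by (simp add: s_def)
      from H[OF s] True have "2 * X \<le> B / s" by simp
      then have "2 * (X * s) \<le> B" using s by (simp add: field_simps)
      moreover have "X * s = B + X" using X by (simp add: s_def field_simps)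
      ultimately show False using X B by linarith
    next
      case False
      then have B0: "B = 0" using z by simp
      define s where "s = X / (A + 1)"
      have s: "s > 0" using X A by (simp add: s_def)
      from H[OF s] B0 have "2 * X \<le> s * A" by simp
      moreover have "s * A = X * (A / (A + 1))" by (simp add: s_def)
      moreover have "A / (A + 1) \<le> 1" using A by simp
      then have "X * (A / (A + 1)) \<le> X * 1" using X by (intro mult_left_mono) auto
      ultimately show False using X by linarith
    qed
  qed
qed

lemma L2_sint_mult:
  assumes "L2_01 f" "L2_01 g"
  shows "set_integrable lborel {0..1} (\<lambda>x. \<bar>f x * g x\<bar>)" "set_integrable lborel {0..1} (\<lambda>x. f x * g x)"
proof -
  have i: "set_integrable lborel {0..1} (\<lambda>x. (f x)^2 / 2 + (g x)^2 / 2)"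
    using assms unfolding L2_01_def by (intro set_integral_add set_integrable_divide) auto
  have m: "set_borel_measurable lborel {0..1} (\<lambda>x. f x * g x)"
    using assms unfolding L2_01_def by (intro sbm_mult) auto
  have b: "\<bar>f x * g x\<bar> \<le> (f x)^2 / 2 + (g x)^2 / 2" for x
    using amgm2[of 1 "f x" "g x"] by simp
  show "set_integrable lborel {0..1} (\<lambda>x. f x * g x)"
    by (rule sint_bound[OF i m]) (use b in auto)
  have m2: "set_borel_measurable lborel {0..1} (\<lambda>x. \<bar>f x * g x\<bar>)"
  proof -
    have "(\<lambda>x. indicator {0..1} x *\<^sub>R \<bar>f x * g x\<bar>) = (\<lambda>x. \<bar>indicator {0..1} x *\<^sub>R (f x * g x)\<bar>)"
      by (auto simp: indicator_def)
    then show ?thesis using m unfolding set_borel_measurable_def by (simp del: abs_mult)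
  qed
  show "set_integrable lborel {0..1} (\<lambda>x. \<bar>f x * g x\<bar>)"
    by (rule sint_bound[OF i m2]) (use b in auto)
qed

lemma L2_cs:
  assumes "L2_01 f" "L2_01 g"
  shows "(LINT x:{0..1}|lborel. \<bar>f x * g x\<bar>) \<le> L2norm_01 f * L2norm_01 g"
  unfolding L2norm_01_def
proof (rule real_cs_aux)
  show "0 \<le> (LINT x:{0..1}|lborel. (f x)^2)" "0 \<le> (LINT x:{0..1}|lborel. (g x)^2)"
    by (auto intro!: sint_nonneg)
  fix s :: real assume s: "s > 0"
  have "(LINT x:{0..1}|lborel. 2 * \<bar>f x * g x\<bar>) \<le> (LINT x:{0..1}|lborel. s * (f x)^2 + (g x)^2 / s)"
    using assms amgm2[OF s] L2_sint_mult[OF assms] unfolding L2_01_def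
    by (intro set_integral_mono set_integral_add set_integrable_mult_right set_integrable_divide) auto
  also have "\<dots> = s * (LINT x:{0..1}|lborel. (f x)^2) + (LINT x:{0..1}|lborel. (g x)^2) / s"
    using assms unfolding L2_01_def
    by (subst set_integral_add) (auto simp: set_integral_mult_right set_integrable_divide)
  finally show "2 * (LINT x:{0..1}|lborel. \<bar>f x * g x\<bar>) \<le> s * (LINT x:{0..1}|lborel. (f x)^2) + (LINT x:{0..1}|lborel. (g x)^2) / s"
    by (simp add: set_integral_mult_right)
qed

lemma L2_one: "L2_01 (\<lambda>x. 1)" "L2norm_01 (\<lambda>x. 1) = 1"
  unfolding L2_01_def L2norm_01_def set_borel_measurable_def
  by (auto simp: set_integrable_def set_lebesgue_integral_def)

lemma L2_L1:
  assumes "L2_01 f"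
  shows "set_integrable lborel {0..1} f" "(LINT x:{0..1}|lborel. \<bar>f x\<bar>) \<le> L2norm_01 f"
  using L2_sint_mult[OF assms L2_one(1)] L2_cs[OF assms L2_one(1)] L2_one(2) by simp_all

lemma L2_add:
  assumes "L2_01 f" "L2_01 g"
  shows "L2_01 (\<lambda>x. f x + g x)" "L2norm_01 (\<lambda>x. f x + g x) \<le> L2norm_01 f + L2norm_01 g"
proof -
  have fg: "set_integrable lborel {0..1} (\<lambda>x. f x * g x)" using L2_sint_mult[OF assms] by simp
  have eq: "(f x + g x)^2 = (f x)^2 + 2 * (f x * g x) + (g x)^2" for x by (simp add: power2_eq_square algebra_simps)
  have i: "set_integrable lborel {0..1} (\<lambda>x. (f x + g x)^2)"
    unfolding eq using assms fg unfolding L2_01_def by (intro set_integral_add set_integrable_mult_right) auto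
  show "L2_01 (\<lambda>x. f x + g x)" using assms i unfolding L2_01_def by (auto intro: sbm_add)
  have E: "(LINT x:{0..1}|lborel. (f x + g x)^2) = (LINT x:{0..1}|lborel. (f x)^2) + 2 * (LINT x:{0..1}|lborel. f x * g x) + (LINT x:{0..1}|lborel. (g x)^2)"
    unfolding eq using assms fg unfolding L2_01_def
    by (simp add: set_integral_add set_integrable_mult_right set_integral_mult_right)
  have C1: "(LINT x:{0..1}|lborel. f x * g x) \<le> (LINT x:{0..1}|lborel. \<bar>f x * g x\<bar>)"
    using L2_sint_mult[OF assms] by (intro set_integral_mono) auto
  have C2: "(LINT x:{0..1}|lborel. \<bar>f x * g x\<bar>) \<le> L2norm_01 f * L2norm_01 g" by (rule L2_cs[OF assms])
  have A: "(LINT x:{0..1}|lborel. (f x)^2) = (L2norm_01 f)^2" "(LINT x:{0..1}|lborel. (g x)^2) = (L2norm_01 g)^2"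
    unfolding L2norm_01_def by (simp_all add: sint_nonneg)
  have S: "(L2norm_01 f + L2norm_01 g)^2 = (L2norm_01 f)^2 + 2 * (L2norm_01 f * L2norm_01 g) + (L2norm_01 g)^2"
    by (simp add: power2_sum)
  have *: "(LINT x:{0..1}|lborel. (f x + g x)^2) \<le> (L2norm_01 f + L2norm_01 g)^2"
    using E C1 C2 A S by linarith
  have nn: "L2norm_01 f + L2norm_01 g \<ge> 0" unfolding L2norm_01_def by (simp add: sint_nonneg)
  have "L2norm_01 (\<lambda>x. f x + g x) \<le> sqrt ((L2norm_01 f + L2norm_01 g)^2)"
    unfolding L2norm_01_def[of "\<lambda>x. f x + g x"] using * by (rule real_sqrt_le_mono)
  also have "\<dots> = L2norm_01 f + L2norm_01 g" using nn by simp
  finally show "L2norm_01 (\<lambda>x. f x + g x) \<le> L2norm_01 f + L2norm_01 g" .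
qed

lemma L2_mono:
  assumes "L2_01 g" "set_borel_measurable lborel {0..1} f" "\<And>x. x \<in> {0..1} \<Longrightarrow> \<bar>f x\<bar> \<le> \<bar>g x\<bar>"
  shows "L2_01 f" "L2norm_01 f \<le> L2norm_01 g"
proof -
  have b: "\<bar>(f x)^2\<bar> \<le> (g x)^2" if "x \<in> {0..1}" for x
    using assms(3)[OF that] by (simp add: abs_le_square_iff)
  have m: "set_borel_measurable lborel {0..1} (\<lambda>x. (f x)^2)"
    using sbm_mult[OF assms(2) assms(2)] by (simp add: power2_eq_square)
  have i: "set_integrable lborel {0..1} (\<lambda>x. (f x)^2)"
    by (rule sint_bound[OF _ m b]) (use assms(1) in \<open>auto simp: L2_01_def\<close>)
  show "L2_01 f" using i assms(2) by (simp add: L2_01_def)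
  show "L2norm_01 f \<le> L2norm_01 g"
    unfolding L2norm_01_def using i assms(1) b
    by (intro real_sqrt_le_mono set_integral_mono) (auto simp: L2_01_def)
qed

lemma L2_cmult:
  assumes "L2_01 f"
  shows "L2_01 (\<lambda>x. c * f x)" "L2norm_01 (\<lambda>x. c * f x) = \<bar>c\<bar> * L2norm_01 f"
proof -
  have eq: "(c * f x)^2 = c^2 * (f x)^2" for x by (simp add: power_mult_distrib)
  show "L2_01 (\<lambda>x. c * f x)" using assms unfolding L2_01_def eq
    by (auto intro!: set_integrable_mult_right sbm_mult sbm_const)
  show "L2norm_01 (\<lambda>x. c * f x) = \<bar>c\<bar> * L2norm_01 f"
    unfolding L2norm_01_def eq by (simp add: set_integral_mult_right real_sqrt_mult)
qed



lemma sint_sub: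
  fixes g :: "real \<Rightarrow> real"
  assumes "set_integrable lborel {0..1} g" "0 \<le> x" "x \<le> 1"
  shows "set_integrable lborel {0..x} g"
  by (rule set_integrable_subset[OF assms(1)]) (use assms in auto)

lemma indef_cont:
  fixes g :: "real \<Rightarrow> real"
  assumes g: "set_integrable lborel {0..1} g"
  shows "continuous_on {0..1} (\<lambda>x. LINT s:{0..x}|lborel. g s)"
proof -
  have C: "continuous_on {0..1} (\<lambda>x. integral {0..x} g)"
    by (rule indefinite_integral_continuous_1) (rule set_borel_integral_eq_integral(1)[OF g])
  have E: "integral {0..x} g = (LINT s:{0..x}|lborel. g s)" if "x \<in> {0..1}" for x
    using that by (intro set_borel_integral_eq_integral(2)[symmetric] sint_sub[OF g]) auto
  show ?thesis by (rule continuous_on_eq[OF C E]) 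
qed

lemma indef_bound:
  fixes g :: "real \<Rightarrow> real"
  assumes g: "L2_01 g" and x: "0 \<le> x" "x \<le> 1"
  shows "\<bar>LINT s:{0..x}|lborel. g s\<bar> \<le> L2norm_01 g"
proof -
  have gi: "set_integrable lborel {0..1} g" using L2_L1(1)[OF g] .
  have "\<bar>LINT s:{0..x}|lborel. g s\<bar> \<le> (\<integral>s. indicator {0..1} s * \<bar>g s\<bar> \<partial>lborel)"
    unfolding set_lebesgue_integral_def
  proof (rule integral_abs_bound_integral)
    show "integrable lborel (\<lambda>s. indicator {0..x} s *\<^sub>R g s)"
      using sint_sub[OF gi x] unfolding set_integrable_def .
    show "integrable lborel (\<lambda>s. indicator {0..1} s * \<bar>g s\<bar>)"
      using set_integrable_abs[OF gi] unfolding set_integrable_def by simp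
    fix s show "\<bar>indicator {0..x} s *\<^sub>R g s\<bar> \<le> indicator {0..1} s * \<bar>g s\<bar>"
      using x by (auto simp: indicator_def)
  qed
  also have "\<dots> = (LINT s:{0..1}|lborel. \<bar>g s\<bar>)" by (simp add: set_lebesgue_integral_def)
  also have "\<dots> \<le> L2norm_01 g" by (rule L2_L1(2)[OF g])
  finally show ?thesis .
qed

lemma L2_cont: "continuous_on {0..1} k \<Longrightarrow> L2_01 k"
  unfolding L2_01_def
  by (auto intro!: sbm_cont borel_integrable_atLeastAtMost' continuous_intros)

lemma L2_abs:
  assumes "L2_01 f"
  shows "L2_01 (\<lambda>x. \<bar>f x\<bar>)" "L2norm_01 (\<lambda>x. \<bar>f x\<bar>) = L2norm_01 f"
proof -
  have m: "set_borel_measurable lborel {0..1} (\<lambda>x. \<bar>f x\<bar>)"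
  proof -
    have "(\<lambda>x. indicator {0..1} x *\<^sub>R \<bar>f x\<bar>) = (\<lambda>x. \<bar>indicator {0..1} x *\<^sub>R f x\<bar>)"
      by (auto simp: indicator_def)
    moreover have "(\<lambda>x. indicator {0..1} x *\<^sub>R f x) \<in> borel_measurable lborel"
      using assms unfolding L2_01_def set_borel_measurable_def by simp
    then have "(\<lambda>x. \<bar>indicator {0..1} x *\<^sub>R f x\<bar>) \<in> borel_measurable lborel"
      by (rule borel_measurable_abs)
    ultimately show ?thesis unfolding set_borel_measurable_def by simp
  qed
  show "L2_01 (\<lambda>x. \<bar>f x\<bar>)" using L2_mono(1)[OF assms m] by simp
  show "L2norm_01 (\<lambda>x. \<bar>f x\<bar>) = L2norm_01 f" by (simp add: L2norm_01_def)
qed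

lemma deriv_zero_open:
  assumes "open S" "t \<in> S" "\<And>x. x \<in> S \<Longrightarrow> \<phi> x = (0::real)"
  shows "deriv \<phi> t = 0"
proof -
  have "DERIV (\<lambda>x. 0) t :> 0" by simp
  then have "DERIV \<phi> t :> 0"
    by (rule has_field_derivative_transform_within_open[OF _ assms(1,2)]) (use assms(3) in auto)
  then show ?thesis by (rule DERIV_imp_deriv)
qed

lemma test_facts:
  assumes "test_fun_01 \<phi>"
  shows "\<And>x. DERIV \<phi> x :> deriv \<phi> x" "\<And>x. DERIV (deriv \<phi>) x :> deriv (deriv \<phi>) x"
    "\<And>x. isCont (deriv \<phi>) x" "\<And>x. isCont (deriv (deriv \<phi>)) x"
    "\<phi> 0 = 0" "\<phi> 1 = 0" "deriv \<phi> 0 = 0" "deriv \<phi> 1 = 0"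
proof -
  have d: "((deriv ^^ k) \<phi>) field_differentiable (at x)" for k x
    using assms unfolding test_fun_01_def by blast
  obtain a b where ab: "0 < a" "a \<le> b" "b < 1" "\<And>x. x \<notin> {a..b} \<Longrightarrow> \<phi> x = 0"
    using assms unfolding test_fun_01_def by blast
  show D0: "DERIV \<phi> x :> deriv \<phi> x" for x
    using d[of 0 x] by (simp add: DERIV_deriv_iff_field_differentiable)
  show D1: "DERIV (deriv \<phi>) x :> deriv (deriv \<phi>) x" for x
    using d[of 1 x] by (simp add: DERIV_deriv_iff_field_differentiable)
  show "isCont (deriv \<phi>) x" for x using D1 DERIV_isCont by blast
  show "isCont (deriv (deriv \<phi>)) x" for x
    using d[of 2 x] field_differentiable_imp_continuous_at by (simp add: numeral_2_eq_2)
  show "\<phi> 0 = 0" "\<phi> 1 = 0" using ab by auto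
  show "deriv \<phi> 0 = 0" by (rule deriv_zero_open[of "{..<a}"]) (use ab in auto)
  show "deriv \<phi> 1 = 0" by (rule deriv_zero_open[of "{b<..}"]) (use ab in auto)
qed

lemma const_on_closed:
  fixes h :: "real \<Rightarrow> real"
  assumes "continuous_on {0..1} h" "\<And>x. x \<in> {0<..<1} \<Longrightarrow> h x = c" "x \<in> {0..1}"
  shows "h x = c"
  by (rule continuous_constant_on_closure[of "{0<..<1}"]) (use assms in auto)



lemma u_eq_G:
  fixes u0 du0 :: "real \<Rightarrow> real"
  assumes u0c: "continuous_on {0..1} u0" and du: "L2_01 du0"
    and wd: "weak_deriv_01 u0 du0" and u00: "u0 0 = 0"
    and x: "x \<in> {0..1}"
  shows "u0 x = (LINT s:{0..x}|lborel. du0 s)"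
proof -
  have dui: "set_integrable lborel {0..1} du0" by (rule L2_L1(1)[OF du])
  define G where "G x = (LINT s:{0..x}|lborel. du0 s)" for x
  have Gc: "continuous_on {0..1} G" unfolding G_def by (rule indef_cont[OF dui])
  have G0: "G 0 = 0"
  proof -
    have "G 0 = integral {0..0} du0"
      unfolding G_def by (rule set_borel_integral_eq_integral(2), rule sint_sub[OF dui]) auto
    then show ?thesis by simp
  qed
  define h where "h x = u0 x - G x" for x
  have hc: "continuous_on {0..1} h" unfolding h_def by (intro continuous_on_diff u0c Gc)
  have H: "(LINT t:{0..1}|lborel. h t * deriv \<phi> t) = 0" if \<phi>: "test_fun_01 \<phi>" for \<phi>
  proof -
    note tf = test_facts[OF \<phi>]
    have dc: "continuous_on {0..1} (deriv \<phi>)"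
      by (intro continuous_at_imp_continuous_on ballI tf(3))
    have i1: "set_integrable lborel {0..1} (\<lambda>t. u0 t * deriv \<phi> t)"
      by (intro borel_integrable_atLeastAtMost' continuous_on_mult u0c dc)
    have i2: "set_integrable lborel {0..1} (\<lambda>t. G t * deriv \<phi> t)"
      by (intro borel_integrable_atLeastAtMost' continuous_on_mult Gc dc)
    have i3: "set_integrable lborel {0..1} (\<lambda>t. du0 t * \<phi> t)"
      by (rule L2_sint_mult(2)[OF du L2_cont])
         (intro continuous_at_imp_continuous_on ballI DERIV_isCont[OF tf(1)])
    have e1: "(LINT t:{0..1}|lborel. u0 t * deriv \<phi> t) = - (LINT t:{0..1}|lborel. du0 t * \<phi> t)"
      using wd \<phi> unfolding weak_deriv_01_def by blast
    have "(LINT t:{0..1}|lborel. G t * deriv \<phi> t) = (LINT s:{0..1}|lborel. du0 s * (\<phi> 1 - \<phi> s))"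
      unfolding G_def by (rule fubini_ibp[OF dui tf(1) tf(3)])
    also have "\<dots> = (LINT s:{0..1}|lborel. (-1) * (du0 s * \<phi> s))"
      using tf(6) by simp
    also have "\<dots> = - (LINT t:{0..1}|lborel. du0 t * \<phi> t)"
      by (subst set_integral_mult_right) simp
    finally have e2: "(LINT t:{0..1}|lborel. G t * deriv \<phi> t) = - (LINT t:{0..1}|lborel. du0 t * \<phi> t)" .
    have "(LINT t:{0..1}|lborel. h t * deriv \<phi> t) = (LINT t:{0..1}|lborel. u0 t * deriv \<phi> t - G t * deriv \<phi> t)"
      unfolding h_def by (simp add: left_diff_distrib)
    also have "\<dots> = 0" using i1 i2 e1 e2 by (simp add: set_integral_diff)
    finally show ?thesis .
  qed
  have hmid: "h y = h (1/2)" if "y \<in> {0<..<1}" for y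
  proof -
    consider "y < 1/2" | "y = 1/2" | "y > 1/2" by linarith
    then show ?thesis
    proof cases
      case 1 then show ?thesis using that by (intro dBR[OF hc H]) auto
    next
      case 3 then show ?thesis using that by (intro dBR[OF hc H, symmetric]) auto
    next
      case 2 then show ?thesis by (simp only:)
    qed
  qed
  have "h x = h (1/2)" by (rule const_on_closed[OF hc hmid x])
  moreover have "h 0 = h (1/2)" by (rule const_on_closed[OF hc hmid]) auto
  moreover have "h 0 = 0" using u00 G0 by (simp add: h_def)
  ultimately have "h x = 0" by simp
  then show ?thesis by (simp add: h_def G_def)
qed



lemma clamp_setup:
  fixes u0 :: "real \<Rightarrow> real"
  assumes u0c: "continuous_on {0..1} u0" and u00: "u0 0 = 0"
  defines "ut \<equiv> \<lambda>x. u0 (max 0 (min 1 x))"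
  defines "Ut \<equiv> \<lambda>t. integral {-1..t} ut"
  shows "\<And>x. isCont ut x" "\<And>x. x \<in> {0..1} \<Longrightarrow> ut x = u0 x"
    "\<And>t. DERIV Ut t :> ut t"
    "\<And>x. x \<in> {0..1} \<Longrightarrow> Ut x = (LINT s:{0..x}|lborel. u0 s)"
proof -
  have "continuous_on UNIV ut"
    unfolding ut_def
    by (rule continuous_on_compose2[OF u0c]) (auto intro!: continuous_intros)
  then show uc: "isCont ut x" for x using continuous_on_eq_continuous_at[of UNIV ut] by simp
  show ue: "ut x = u0 x" if "x \<in> {0..1}" for x using that by (simp add: ut_def)
  have uz: "ut x = 0" if "x \<le> 0" for x using that u00 by (simp add: ut_def)
  show "DERIV Ut t :> ut t" for t
    unfolding Ut_def by (rule antideriv_global[where c=0]) (use uc uz in auto)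
  fix x :: real assume x: "x \<in> {0..1}"
  have ui: "ut integrable_on {-1..x}"
    by (intro integrable_continuous_interval continuous_at_imp_continuous_on ballI uc)
  have "Ut x = integral {-1..0} ut + integral {0..x} ut"
    unfolding Ut_def using x Henstock_Kurzweil_Integration.integral_combine[where a="-1" and c=0 and b=x and f=ut, OF _ _ ui] by auto
  also have "integral {-1..0} ut = 0" by (rule antideriv_zero[where c=0]) (use uz in auto)
  also have "integral {0..x} ut = integral {0..x} u0"
    by (rule integral_cong) (use x ue in auto)
  also have "integral {0..x} u0 = (LINT s:{0..x}|lborel. u0 s)"
  proof (rule set_borel_integral_eq_integral(2)[symmetric])
    show "set_integrable lborel {0..x} u0"
      by (rule borel_integrable_atLeastAtMost', rule continuous_on_subset[OF u0c]) (use x in auto)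
  qed
  finally show "Ut x = (LINT s:{0..x}|lborel. u0 s)" by simp
qed



theorem mainTheorem6:
  fixes u0 du0 :: "real \<Rightarrow> real"
  assumes "L2_01 u0"
    and "continuous_on {0..1} u0"
    and "L2_01 du0"
    and "weak_deriv_01 u0 du0"
    and "u0 0 = 0" and "u0 1 = 0"
  shows "\<exists>w. L2_01 w \<and> weak_deriv2_01 (ColeHopf u0) w
           \<and> L2norm_01 w \<le> (1/2) * exp (L2norm_01 u0) * L2norm_01 du0 * (1 + L2norm_01 u0 / 2)"
proof -
  note uL2 = assms(1) and u0c = assms(2) and duL2 = assms(3) and wd = assms(4) and u00 = assms(5)
  define N where "N = L2norm_01 u0"
  define K where "K = L2norm_01 du0"
  have N0: "N \<ge> 0" "K \<ge> 0" unfolding N_def K_def L2norm_01_def by (simp_all add: sint_nonneg)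
  have dui: "set_integrable lborel {0..1} du0" by (rule L2_L1(1)[OF duL2])
  define G where "G x = (LINT s:{0..x}|lborel. du0 s)" for x
  have uG: "u0 x = G x" if "x \<in> {0..1}" for x
    unfolding G_def by (rule u_eq_G[OF u0c duL2 wd u00 that])
  have ub: "\<bar>u0 x\<bar> \<le> K" if "x \<in> {0..1}" for x
    using uG[OF that] indef_bound[OF duL2, of x] that unfolding K_def G_def by auto
  define ut where "ut = (\<lambda>x. u0 (max 0 (min 1 x)))"
  define Ut where "Ut = (\<lambda>t. integral {-1..t} ut)"
  note cs = clamp_setup[OF u0c u00, folded ut_def, folded Ut_def]
  have utc: "\<And>x. isCont ut x" by (rule cs(1))
  have ute: "\<And>x. x \<in> {0..1} \<Longrightarrow> ut x = u0 x" by (simp add: ut_def)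
  have dUt: "\<And>t. DERIV Ut t :> ut t" using cs(3) by (simp add: ut_def)
  have Ute: "\<And>x. x \<in> {0..1} \<Longrightarrow> Ut x = (LINT s:{0..x}|lborel. u0 s)" using cs(4) by (simp add: Ut_def ut_def)
  have Utc: "\<And>x. isCont Ut x" using dUt DERIV_isCont by blast
  have Ub: "\<bar>Ut x\<bar> \<le> N" if "x \<in> {0..1}" for x
    using Ute[OF that] indef_bound[OF uL2, of x] that unfolding N_def by auto
  define Z where "Z = (LINT y:{0..1}|lborel. exp (- (1/2) * (LINT s:{0..y}|lborel. u0 s)))"
  have Z': "Z = (LINT y:{0..1}|lborel. exp (- (1/2) * Ut y))"
    unfolding Z_def by (rule set_lebesgue_integral_cong) (auto simp: Ute)
  have Zlow: "exp (- N / 2) \<le> Z"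
  proof -
    have "(LINT (y::real):{0..1}|lborel. exp (- N / 2)) \<le> (LINT y:{0..1}|lborel. exp (- (1/2) * Ut y))"
    proof (rule set_integral_mono[where f="\<lambda>y. exp (- N / 2)" and g="\<lambda>y. exp (- (1/2) * Ut y)"])
      show "set_integrable lborel {0..1::real} (\<lambda>y. exp (- N / 2))"
        by (intro borel_integrable_atLeastAtMost' continuous_intros)
      show "set_integrable lborel {0..1} (\<lambda>y. exp (- (1/2) * Ut y))"
        by (intro borel_integrable_atLeastAtMost' continuous_at_imp_continuous_on ballI
            continuous_intros Utc)
      fix y :: real assume "y \<in> {0..1}"
      then show "exp (- N / 2) \<le> exp (- (1/2) * Ut y)" using Ub[of y] by auto
    qed
    then show ?thesis unfolding Z' by (simp add: set_lebesgue_integral_def)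
  qed
  have Zpos: "Z > 0" using Zlow by (meson exp_gt_zero less_le_trans)
  define vt where "vt t = exp (- (1/2) * Ut t) / Z" for t
  define vt' where "vt' t = - (1/2) * ut t * vt t" for t
  have CH: "ColeHopf u0 x = vt x" if "x \<in> {0..1}" for x
    unfolding ColeHopf_def vt_def Z_def[symmetric] using Ute[OF that] by simp
  have dvt: "DERIV vt t :> vt' t" for t
    unfolding vt_def vt'_def using Zpos
    by (auto intro!: derivative_eq_intros dUt simp: field_simps)
  have vtc: "isCont vt t" for t using dvt DERIV_isCont by blast
  have vt'c: "isCont vt' t" for t unfolding vt'_def by (intro continuous_intros utc vtc)
  have vtpos: "vt t > 0" for t unfolding vt_def using Zpos by simp
  have vtb: "vt x \<le> exp N" if "x \<in> {0..1}" for x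
  proof -
    have "exp (- (1/2) * Ut x) \<le> exp (N / 2)" using Ub[OF that] by auto
    then have "vt x \<le> exp (N / 2) / Z" unfolding vt_def using Zpos by (simp add: divide_right_mono)
    also have "\<dots> \<le> exp (N / 2) / exp (- N / 2)" using Zlow Zpos by (intro divide_left_mono) auto
    also have "\<dots> = exp N" by (simp add: exp_minus field_simps flip: exp_add)
    finally show ?thesis .
  qed
  have Ic: "\<And>f. (\<And>x. isCont f x) \<Longrightarrow> continuous_on {0..1} f"
    by (intro continuous_at_imp_continuous_on ballI) auto
  define w where "w x = vt x * ((1/4) * (u0 x * u0 x) + (-1/2) * du0 x)" for x
  have weak: "weak_deriv2_01 (ColeHopf u0) w"
    unfolding weak_deriv2_01_def
  proof (intro allI impI)
    fix \<phi> assume \<phi>: "test_fun_01 \<phi>"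
    note tf = test_facts[OF \<phi>]
    define \<psi> where "\<psi> x = vt x * \<phi> x" for x
    define \<psi>' where "\<psi>' x = vt' x * \<phi> x + vt x * deriv \<phi> x" for x
    have d\<psi>: "DERIV \<psi> x :> \<psi>' x" for x
      unfolding \<psi>_def \<psi>'_def by (auto intro!: derivative_eq_intros dvt tf(1))
    have c\<psi>': "isCont \<psi>' x" for x
      unfolding \<psi>'_def by (intro continuous_intros vt'c vtc tf(3) DERIV_isCont[OF tf(1)])
    have c\<phi>: "isCont \<phi> x" for x using DERIV_isCont[OF tf(1)] .
    have e1: "(LINT x:{0..1}|lborel. ColeHopf u0 x * deriv (deriv \<phi>) x) = (LINT x:{0..1}|lborel. vt x * deriv (deriv \<phi>) x)"
      by (rule set_lebesgue_integral_cong) (auto simp: CH)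
    have e2: "(LINT x:{0..1}|lborel. vt x * deriv (deriv \<phi>) x) = - (LINT x:{0..1}|lborel. vt' x * deriv \<phi> x)"
    proof -
      have "(\<integral>x. indicator {0..1} x *\<^sub>R (vt x * deriv (deriv \<phi>) x) \<partial>lborel)
          = vt 1 * deriv \<phi> 1 - vt 0 * deriv \<phi> 0 - (\<integral>x. indicator {0..1} x *\<^sub>R (vt' x * deriv \<phi> x) \<partial>lborel)"
        by (rule integral_by_parts') (auto intro: vt'c tf(4) dvt tf(2))
      then show ?thesis using tf(7,8) by (simp add: set_lebesgue_integral_def)
    qed
    have i_ut_vt'd: "set_integrable lborel {0..1} (\<lambda>x. vt' x * deriv \<phi> x)"
      by (intro borel_integrable_atLeastAtMost' Ic continuous_intros vt'c tf(3))
    have e3: "(LINT x:{0..1}|lborel. vt' x * deriv \<phi> x)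
        = - (1/2) * (LINT x:{0..1}|lborel. G x * \<psi>' x) - (1/4) * (LINT x:{0..1}|lborel. (ut x)^2 * vt x * \<phi> x)"
    proof -
      have iG: "set_integrable lborel {0..1} (\<lambda>x. ut x * \<psi>' x)"
        by (intro borel_integrable_atLeastAtMost' Ic continuous_intros utc c\<psi>')
      have iu2: "set_integrable lborel {0..1} (\<lambda>x. (ut x)^2 * vt x * \<phi> x)"
        by (intro borel_integrable_atLeastAtMost' Ic continuous_intros utc vtc c\<phi>)
      have "(LINT x:{0..1}|lborel. vt' x * deriv \<phi> x)
          = (LINT x:{0..1}|lborel. (- (1/2)) * (ut x * \<psi>' x) + (- (1/4)) * ((ut x)^2 * vt x * \<phi> x))"
        by (rule set_lebesgue_integral_cong)
           (auto simp: vt'_def \<psi>'_def power2_eq_square algebra_simps)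
      also have "\<dots> = (LINT x:{0..1}|lborel. (- (1/2)) * (ut x * \<psi>' x)) + (LINT x:{0..1}|lborel. (- (1/4)) * ((ut x)^2 * vt x * \<phi> x))"
        by (rule set_integral_add(2)) (intro set_integrable_mult_right iG iu2)+
      also have "\<dots> = - (1/2) * (LINT x:{0..1}|lborel. ut x * \<psi>' x) - (1/4) * (LINT x:{0..1}|lborel. (ut x)^2 * vt x * \<phi> x)"
        by (simp only: set_integral_mult_right; simp)
      also have "(LINT x:{0..1}|lborel. ut x * \<psi>' x) = (LINT x:{0..1}|lborel. G x * \<psi>' x)"
        by (rule set_lebesgue_integral_cong) (auto simp: ute uG)
      finally show ?thesis .
    qed
    have e4: "(LINT x:{0..1}|lborel. G x * \<psi>' x) = - (LINT x:{0..1}|lborel. du0 x * (vt x * \<phi> x))"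
    proof -
      have "(LINT x:{0..1}|lborel. G x * \<psi>' x) = (LINT s:{0..1}|lborel. du0 s * (\<psi> 1 - \<psi> s))"
        unfolding G_def by (rule fubini_ibp[OF dui d\<psi> c\<psi>'])
      also have "\<dots> = (LINT s:{0..1}|lborel. (-1) * (du0 s * (vt s * \<phi> s)))"
        using tf(6) by (simp add: \<psi>_def)
      also have "\<dots> = - (LINT x:{0..1}|lborel. du0 x * (vt x * \<phi> x))"
        by (subst set_integral_mult_right) simp
      finally show ?thesis .
    qed
    have e5: "(LINT x:{0..1}|lborel. w x * \<phi> x)
        = (1/4) * (LINT x:{0..1}|lborel. (ut x)^2 * vt x * \<phi> x) - (1/2) * (LINT x:{0..1}|lborel. du0 x * (vt x * \<phi> x))"
    proof -
      have iu2: "set_integrable lborel {0..1} (\<lambda>x. (ut x)^2 * vt x * \<phi> x)"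
        by (intro borel_integrable_atLeastAtMost' Ic continuous_intros utc vtc c\<phi>)
      have id: "set_integrable lborel {0..1} (\<lambda>x. du0 x * (vt x * \<phi> x))"
        by (rule L2_sint_mult(2)[OF duL2 L2_cont]) (intro Ic continuous_intros vtc c\<phi>)
      have "(LINT x:{0..1}|lborel. w x * \<phi> x)
          = (LINT x:{0..1}|lborel. (1/4) * ((ut x)^2 * vt x * \<phi> x) + (- (1/2)) * (du0 x * (vt x * \<phi> x)))"
        by (rule set_lebesgue_integral_cong) (auto simp: w_def ute power2_eq_square algebra_simps)
      also have "\<dots> = (LINT x:{0..1}|lborel. (1/4) * ((ut x)^2 * vt x * \<phi> x)) + (LINT x:{0..1}|lborel. (- (1/2)) * (du0 x * (vt x * \<phi> x)))"
        by (rule set_integral_add(2)) (intro set_integrable_mult_right iu2 id)+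
      also have "\<dots> = (1/4) * (LINT x:{0..1}|lborel. (ut x)^2 * vt x * \<phi> x) - (1/2) * (LINT x:{0..1}|lborel. du0 x * (vt x * \<phi> x))"
        by (simp only: set_integral_mult_right; simp)
      finally show ?thesis .
    qed
    show "(LINT x:{0..1}|lborel. ColeHopf u0 x * deriv (deriv \<phi>) x) = (LINT x:{0..1}|lborel. w x * \<phi> x)"
      unfolding e1 e2 e3 e4 e5 by simp
  qed
  define R where "R x = exp N * ((1/4) * K * \<bar>u0 x\<bar> + (1/2) * \<bar>du0 x\<bar>)" for x
  have RL2: "L2_01 (\<lambda>x. (1/4) * K * \<bar>u0 x\<bar> + (1/2) * \<bar>du0 x\<bar>)"
    by (intro L2_add(1) L2_cmult(1) L2_abs(1) uL2 duL2)
  have RL2': "L2_01 R" unfolding R_def by (intro L2_cmult(1) RL2)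
  have Rn: "L2norm_01 R \<le> exp N * ((1/4) * K * N + (1/2) * K)"
  proof -
    have "L2norm_01 R = exp N * L2norm_01 (\<lambda>x. (1/4) * K * \<bar>u0 x\<bar> + (1/2) * \<bar>du0 x\<bar>)"
      unfolding R_def by (subst L2_cmult(2)[OF RL2]) simp
    also have "L2norm_01 (\<lambda>x. (1/4) * K * \<bar>u0 x\<bar> + (1/2) * \<bar>du0 x\<bar>)
        \<le> L2norm_01 (\<lambda>x. (1/4) * K * \<bar>u0 x\<bar>) + L2norm_01 (\<lambda>x. (1/2) * \<bar>du0 x\<bar>)"
      by (intro L2_add(2) L2_cmult(1) L2_abs(1) uL2 duL2)
    also have "L2norm_01 (\<lambda>x. (1/4) * K * \<bar>u0 x\<bar>) = (1/4) * K * N"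
      using N0 by (subst L2_cmult(2)[OF L2_abs(1)[OF uL2]]) (simp add: L2_abs(2)[OF uL2] N_def)
    also have "L2norm_01 (\<lambda>x. (1/2) * \<bar>du0 x\<bar>) = (1/2) * K"
      by (subst L2_cmult(2)[OF L2_abs(1)[OF duL2]]) (simp add: L2_abs(2)[OF duL2] K_def)
    finally show ?thesis by (simp add: mult_left_mono)
  qed
  have wm: "set_borel_measurable lborel {0..1} w"
  proof -
    have m1: "set_borel_measurable lborel {0..1} u0" "set_borel_measurable lborel {0..1} du0"
      using uL2 duL2 by (auto simp: L2_01_def)
    have m2: "set_borel_measurable lborel {0..1} vt" by (intro sbm_cont Ic vtc)
    show ?thesis unfolding w_def
      by (intro sbm_mult sbm_add m1 m2 sbm_const) auto
  qed
  have wR: "\<bar>w x\<bar> \<le> \<bar>R x\<bar>" if x: "x \<in> {0..1}" for x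
  proof -
    have "\<bar>(1/4) * (u0 x * u0 x) + (-1/2) * du0 x\<bar> \<le> (1/4) * (\<bar>u0 x\<bar> * \<bar>u0 x\<bar>) + (1/2) * \<bar>du0 x\<bar>"
    proof -
      have sq: "0 \<le> u0 x * u0 x" by simp
      have e: "\<bar>u0 x\<bar> * \<bar>u0 x\<bar> = u0 x * u0 x" by (metis abs_mult abs_mult_self_eq)
      show ?thesis unfolding e using sq by arith
    qed
    also have "\<dots> \<le> (1/4) * (K * \<bar>u0 x\<bar>) + (1/2) * \<bar>du0 x\<bar>"
      using mult_right_mono[OF ub[OF x], of "\<bar>u0 x\<bar>"] by simp
    finally have a: "\<bar>(1/4) * (u0 x * u0 x) + (-1/2) * du0 x\<bar> \<le> (1/4) * K * \<bar>u0 x\<bar> + (1/2) * \<bar>du0 x\<bar>"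
      by simp
    have "\<bar>w x\<bar> = vt x * \<bar>(1/4) * (u0 x * u0 x) + (-1/2) * du0 x\<bar>"
      unfolding w_def using vtpos[of x] by (simp add: abs_mult)
    also have "\<dots> \<le> exp N * ((1/4) * K * \<bar>u0 x\<bar> + (1/2) * \<bar>du0 x\<bar>)"
      using a vtb[OF x] vtpos[of x] by (intro mult_mono) auto
    also have "\<dots> = \<bar>R x\<bar>" unfolding R_def using N0 by simp
    finally show ?thesis .
  qed
  have wL2: "L2_01 w" by (rule L2_mono(1)[OF RL2' wm wR])
  have "L2norm_01 w \<le> L2norm_01 R" by (rule L2_mono(2)[OF RL2' wm wR])
  also have "\<dots> \<le> exp N * ((1/4) * K * N + (1/2) * K)" by (rule Rn)
  also have "\<dots> = (1/2) * exp N * K * (1 + N / 2)" by (simp add: algebra_simps)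
  finally have "L2norm_01 w \<le> (1/2) * exp (L2norm_01 u0) * L2norm_01 du0 * (1 + L2norm_01 u0 / 2)"
    unfolding N_def K_def .
  then show ?thesis using wL2 weak by blast
qed

end
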